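(* Let $\mathbb S[\boldsymbol\kappa]$ be an unstable-negative feedback that is a $P^-_{FF}$ matrix. Then $\mathbb S[\boldsymbol\kappa]$ is $D$-Hopf.
   Context: For a reaction network with reactant coefficients $s^j_m$ and stoichiometric matrix $\mathbb S$, a $k$-Child-Selection $\boldsymbol\kappa=(\kappa,E_\kappa,J)$ is a bijection $J:\kappa\to E_\kappa$ between $k$ species and $k$ reactions with $s^{J(m)}_m>0$; its CS-matrix is $\mathbb S[\boldsymbol\kappa]_{ml}=\mathbb S_{m,J(l)}$. An unstable core is a Hurwitz-unstable (some eigenvalue with positive real part) CS-matrix with no Hurwitz-unstable proper principal submatrix; a $k\times k$ unstable core with $\operatorname{sign}\det=(-1)^k$ is an unstable-negative feedback. $P^-_0$ matrix: every nonzero $j\times j$ principal minor has sign $(-1)^j$. An $n\times n$ $P^-_0$ matrix is $P^-_{FF}$ if it has a nested sequence of invertible principal submatrices $A[\kappa_1]\subset\dots\subset A[\kappa_n]$ with $|\kappa_i|=i$. Inertia: numbers of eigenvalues with negative, positive, zero real part. $A$ is $D$-Hopf if there exist an invertible principal submatrix $A[\kappa]$ and positive diagonal $D_1,D_2$ with $\operatorname{inertia}(A[\kappa]D_1)\ne\operatorname{inertia}(A[\kappa]D_2)$. *)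

theory Defs
  imports "HOL-Analysis.Analysis" "HOL-Computational_Algebra.Polynomial"
begin

text \<open>Square matrices indexed by a finite index set I are functions
  'm => 'm => 'a restricted to I x I.\<close>

definition det_on :: "'m set \<Rightarrow> ('m \<Rightarrow> 'm \<Rightarrow> 'a::comm_ring_1) \<Rightarrow> 'a" where
  "det_on I A = (\<Sum>p | p permutes I. of_int (sign p) * (\<Prod>i\<in>I. A i (p i)))"

definition charpoly_on :: "'m set \<Rightarrow> ('m \<Rightarrow> 'm \<Rightarrow> real) \<Rightarrow> complex poly" where
  "charpoly_on I A = det_on I (\<lambda>i j. (if i = j then [:0, 1:] else 0) - [:complex_of_real (A i j):])"

definition eigenvalues_on :: "'m set \<Rightarrow> ('m \<Rightarrow> 'm \<Rightarrow> real) \<Rightarrow> complex set" where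
  "eigenvalues_on I A = {z. poly (charpoly_on I A) z = 0}"

definition hurwitz_unstable_on :: "'m set \<Rightarrow> ('m \<Rightarrow> 'm \<Rightarrow> real) \<Rightarrow> bool" where
  "hurwitz_unstable_on I A \<longleftrightarrow> (\<exists>z\<in>eigenvalues_on I A. Re z > 0)"

definition inertia_on :: "'m set \<Rightarrow> ('m \<Rightarrow> 'm \<Rightarrow> real) \<Rightarrow> nat \<times> nat \<times> nat" where
  "inertia_on I A =
     ((\<Sum>z\<in>{z\<in>eigenvalues_on I A. Re z < 0}. order z (charpoly_on I A)),
      (\<Sum>z\<in>{z\<in>eigenvalues_on I A. Re z > 0}. order z (charpoly_on I A)),
      (\<Sum>z\<in>{z\<in>eigenvalues_on I A. Re z = 0}. order z (charpoly_on I A)))"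

definition reaction_network ::
  "('j \<Rightarrow> 'm \<Rightarrow> real) \<Rightarrow> ('j \<Rightarrow> 'm \<Rightarrow> real) \<Rightarrow> ('m \<Rightarrow> 'j \<Rightarrow> real) \<Rightarrow> bool" where
  "reaction_network s p S \<longleftrightarrow>
     (\<forall>j m. s j m \<ge> 0 \<and> p j m \<ge> 0) \<and> (\<forall>m j. S m j = p j m - s j m)"

definition child_selection ::
  "('j \<Rightarrow> 'm \<Rightarrow> real) \<Rightarrow> 'm set \<Rightarrow> 'j set \<Rightarrow> ('m \<Rightarrow> 'j) \<Rightarrow> bool" where
  "child_selection s K E J \<longleftrightarrow> bij_betw J K E \<and> (\<forall>m\<in>K. s (J m) m > 0)"

definition cs_matrix :: "('m \<Rightarrow> 'j \<Rightarrow> real) \<Rightarrow> ('m \<Rightarrow> 'j) \<Rightarrow> 'm \<Rightarrow> 'm \<Rightarrow> real" where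
  "cs_matrix S J = (\<lambda>m l. S m (J l))"

definition unstable_core_on :: "'m set \<Rightarrow> ('m \<Rightarrow> 'm \<Rightarrow> real) \<Rightarrow> bool" where
  "unstable_core_on K A \<longleftrightarrow> hurwitz_unstable_on K A \<and>
     (\<forall>I. I \<subset> K \<longrightarrow> \<not> hurwitz_unstable_on I A)"

definition unstable_negative_feedback_on :: "'m set \<Rightarrow> ('m \<Rightarrow> 'm \<Rightarrow> real) \<Rightarrow> bool" where
  "unstable_negative_feedback_on K A \<longleftrightarrow> unstable_core_on K A \<and>
     sgn (det_on K A) = (-1) ^ card K"

definition P0_minus_on :: "'m set \<Rightarrow> ('m \<Rightarrow> 'm \<Rightarrow> real) \<Rightarrow> bool" where
  "P0_minus_on K A \<longleftrightarrow>
     (\<forall>I\<subseteq>K. det_on I A \<noteq> 0 \<longrightarrow> sgn (det_on I A) = (-1) ^ card I)"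

definition PFF_minus_on :: "'m set \<Rightarrow> ('m \<Rightarrow> 'm \<Rightarrow> real) \<Rightarrow> bool" where
  "PFF_minus_on K A \<longleftrightarrow> P0_minus_on K A \<and>
     (\<exists>f :: nat \<Rightarrow> 'm set.
        (\<forall>i\<in>{1..card K}. f i \<subseteq> K \<and> card (f i) = i \<and> det_on (f i) A \<noteq> 0) \<and>
        (\<forall>i\<in>{1..<card K}. f i \<subset> f (Suc i)))"

definition D_Hopf_on :: "'m set \<Rightarrow> ('m \<Rightarrow> 'm \<Rightarrow> real) \<Rightarrow> bool" where
  "D_Hopf_on K A \<longleftrightarrow>
     (\<exists>I\<subseteq>K. det_on I A \<noteq> 0 \<and>
        (\<exists>d1 d2 :: 'm \<Rightarrow> real. (\<forall>i\<in>I. d1 i > 0 \<and> d2 i > 0) \<and>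
           inertia_on I (\<lambda>i j. A i j * d1 j) \<noteq> inertia_on I (\<lambda>i j. A i j * d2 j)))"

end

theory Submission imports Defs begin

definition cm :: "('m \<Rightarrow> 'm \<Rightarrow> real) \<Rightarrow> 'm \<Rightarrow> 'm \<Rightarrow> complex poly" where
  "cm B i j = (if i = j then [:0, 1:] else 0) - [:complex_of_real (B i j):]"

lemma charpoly_cm: "charpoly_on I B = det_on I (cm B)"
  unfolding charpoly_on_def cm_def ..

lemma det_cong:
  assumes "\<And>i j. i \<in> I \<Longrightarrow> j \<in> I \<Longrightarrow> M i j = N i j"
  shows "det_on I M = det_on I N"
  unfolding det_on_def
proof (rule sum.cong[OF refl])
  fix p assume "p \<in> {p. p permutes I}"
  then have p: "p permutes I" by simp
  show "of_int (sign p) * (\<Prod>i\<in>I. M i (p i)) = of_int (sign p) * (\<Prod>i\<in>I. N i (p i))"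
    using assms permutes_in_image[OF p] by (auto intro!: prod.cong)
qed

lemma det_empty: "det_on {} M = 1"
  unfolding det_on_def by simp

lemma det_expand:
  fixes M :: "'m \<Rightarrow> 'm \<Rightarrow> 'a::comm_ring_1"
  assumes fin: "finite I" and k: "k \<in> I"
  shows "det_on I (\<lambda>i j. if j = k then f i else M i j) =
    (\<Sum>p | p permutes I. of_int (sign p) * (f (inv p k) * (\<Prod>i\<in>I-{inv p k}. M i (p i))))"
  unfolding det_on_def
proof (rule sum.cong[OF refl])
  fix p assume "p \<in> {p. p permutes I}"
  then have p: "p permutes I" by simp
  define i0 where "i0 = inv p k"
  have i0: "i0 \<in> I" unfolding i0_def using permutes_inv[OF p] k permutes_in_image by metis
  have pi0: "p i0 = k" unfolding i0_def using permutes_inverses(1)[OF p] by simp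
  have "(\<Prod>i\<in>I. if p i = k then f i else M i (p i)) =
     (if p i0 = k then f i0 else M i0 (p i0)) * (\<Prod>i\<in>I-{i0}. if p i = k then f i else M i (p i))"
    by (rule prod.remove[OF fin i0])
  also have "(\<Prod>i\<in>I-{i0}. if p i = k then f i else M i (p i)) = (\<Prod>i\<in>I-{i0}. M i (p i))"
  proof (rule prod.cong[OF refl])
    fix i assume "i \<in> I - {i0}"
    then have "p i \<noteq> k" using pi0 permutes_inj[OF p] by (metis DiffD2 injD singletonI)
    then show "(if p i = k then f i else M i (p i)) = M i (p i)" by simp
  qed
  finally show "of_int (sign p) * (\<Prod>i\<in>I. if p i = k then f i else M i (p i)) =
     of_int (sign p) * (f (inv p k) * (\<Prod>i\<in>I-{inv p k}. M i (p i)))"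
    using pi0 i0_def by simp
qed

lemma det_add_col:
  fixes M :: "'m \<Rightarrow> 'm \<Rightarrow> 'a::comm_ring_1"
  assumes fin: "finite I" and k: "k \<in> I"
  shows "det_on I (\<lambda>i j. if j = k then f i + g i else M i j) =
    det_on I (\<lambda>i j. if j = k then f i else M i j) + det_on I (\<lambda>i j. if j = k then g i else M i j)"
  unfolding det_expand[OF fin k] by (simp add: algebra_simps sum.distrib)

lemma det_scale_col:
  fixes M :: "'m \<Rightarrow> 'm \<Rightarrow> 'a::comm_ring_1"
  assumes fin: "finite I" and k: "k \<in> I"
  shows "det_on I (\<lambda>i j. if j = k then c * f i else M i j) =
    c * det_on I (\<lambda>i j. if j = k then f i else M i j)"
  unfolding det_expand[OF fin k] by (simp add: algebra_simps sum_distrib_left)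

lemma det_unit_col:
  fixes M :: "'m \<Rightarrow> 'm \<Rightarrow> 'a::comm_ring_1"
  assumes fin: "finite I" and k: "k \<in> I"
  shows "det_on I (\<lambda>i j. if j = k then (if i = k then x else 0) else M i j) =
    x * det_on (I - {k}) M"
proof -
  have "det_on I (\<lambda>i j. if j = k then (if i = k then x else 0) else M i j) =
    (\<Sum>p | p permutes I. if p k = k then x * (of_int (sign p) * (\<Prod>i\<in>I-{k}. M i (p i))) else 0)"
    unfolding det_expand[OF fin k]
  proof (rule sum.cong[OF refl])
    fix p assume "p \<in> {p. p permutes I}"
    then have p: "p permutes I" by simp
    have "(inv p k = k) = (p k = k)"
      by (metis permutes_inverses(1,2)[OF p])
    then show "of_int (sign p) * ((if inv p k = k then x else 0) * (\<Prod>i\<in>I-{inv p k}. M i (p i))) =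
      (if p k = k then x * (of_int (sign p) * (\<Prod>i\<in>I-{k}. M i (p i))) else 0)"
      by auto
  qed
  also have "\<dots> = (\<Sum>p \<in> {p. p permutes I \<and> p k = k}. x * (of_int (sign p) * (\<Prod>i\<in>I-{k}. M i (p i))))"
    using finite_permutations[OF fin] by (simp add: sum.inter_filter[symmetric] Collect_conj_eq)
  also have "{p. p permutes I \<and> p k = k} = {p. p permutes (I - {k})}"
  proof (intro set_eqI iffI)
    fix p assume "p \<in> {p. p permutes I \<and> p k = k}"
    then show "p \<in> {p. p permutes (I - {k})}"
      using permutes_superset[of p I "I - {k}"] by auto
  next
    fix p assume "p \<in> {p. p permutes (I - {k})}"
    then have "p permutes (I - {k})" by simp
    then show "p \<in> {p. p permutes I \<and> p k = k}"
      using permutes_subset[of p "I - {k}" I] permutes_not_in[of p "I - {k}" k] by auto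
  qed
  finally show ?thesis unfolding det_on_def by (simp add: sum_distrib_left)
qed

lemma det_degree:
  fixes M :: "'m \<Rightarrow> 'm \<Rightarrow> 'a::comm_ring_1 poly"
  assumes fin: "finite I" and k: "k \<in> I"
    and f: "\<And>i. degree (f i) = 0" and M: "\<And>i j. i \<in> I \<Longrightarrow> j \<in> I \<Longrightarrow> degree (M i j) \<le> 1"
  shows "degree (det_on I (\<lambda>i j. if j = k then f i else M i j)) \<le> card I - 1"
  unfolding det_expand[OF fin k]
proof (rule degree_sum_le)
  show "finite {p. p permutes I}" using finite_permutations[OF fin] .
  fix p assume "p \<in> {p. p permutes I}"
  then have p: "p permutes I" by simp
  define i0 where "i0 = inv p k"
  have i0: "i0 \<in> I" unfolding i0_def using permutes_inv[OF p] k permutes_in_image by metis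
  have "degree (\<Prod>i\<in>I-{i0}. M i (p i)) \<le> (\<Sum>i\<in>I-{i0}. degree (M i (p i)))"
    using degree_prod_sum_le[of "I-{i0}" "\<lambda>i. M i (p i)"] fin by (simp add: o_def)
  also have "\<dots> \<le> (\<Sum>i\<in>I-{i0}. 1)"
    by (rule sum_mono) (use M permutes_in_image[OF p] in auto)
  also have "\<dots> = card I - 1" using i0 fin by simp
  finally have dp: "degree (\<Prod>i\<in>I-{i0}. M i (p i)) \<le> card I - 1" .
  have "degree (of_int (sign p) * (f i0 * (\<Prod>i\<in>I-{i0}. M i (p i)))) \<le>
      degree (of_int (sign p) :: 'a poly) + (degree (f i0) + degree (\<Prod>i\<in>I-{i0}. M i (p i)))"
    by (meson add_le_mono degree_mult_le le_trans order_refl)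
  then show "degree (of_int (sign p) * (f (inv p k) * (\<Prod>i\<in>I-{inv p k}. M i (p i)))) \<le> card I - 1"
    using dp f unfolding i0_def by simp
qed

lemma cm_degree: "degree (cm B i j) \<le> 1"
  unfolding cm_def by (rule order.trans[OF degree_diff_le_max]) auto

lemma charpoly_decomp:
  assumes fin: "finite I" and k: "k \<in> I"
  shows "charpoly_on I B = [:0, 1:] * charpoly_on (I - {k}) B +
     det_on I (\<lambda>i j. if j = k then [:- complex_of_real (B i k):] else cm B i j)"
proof -
  have "charpoly_on I B = det_on I (\<lambda>i j. if j = k then (if i = k then [:0, 1:] else 0) + [:- complex_of_real (B i k):] else cm B i j)"
    unfolding charpoly_cm by (rule det_cong) (auto simp: cm_def)
  also have "\<dots> = det_on I (\<lambda>i j. if j = k then (if i = k then [:0, 1:] else 0) else cm B i j) +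
     det_on I (\<lambda>i j. if j = k then [:- complex_of_real (B i k):] else cm B i j)"
    by (rule det_add_col[OF fin k])
  also have "det_on I (\<lambda>i j. if j = k then (if i = k then [:0, 1:] else 0) else cm B i j) = [:0, 1:] * charpoly_on (I - {k}) B"
    unfolding det_unit_col[OF fin k] charpoly_cm ..
  finally show ?thesis .
qed

lemma charpoly_monic:
  assumes "finite I"
  shows "degree (charpoly_on I B) = card I \<and> coeff (charpoly_on I B) (card I) = 1"
  using assms
proof (induction I rule: finite_induct)
  case empty
  then show ?case unfolding charpoly_cm det_empty by simp
next
  case (insert k F)
  let ?q = "charpoly_on F B"
  let ?G = "det_on (insert k F) (\<lambda>i j. if j = k then [:- complex_of_real (B i k):] else cm B i j)"
  have dec: "charpoly_on (insert k F) B = pCons 0 ?q + ?G"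
    using charpoly_decomp[of "insert k F" k B] insert by simp
  have dG: "degree ?G \<le> card F"
    using det_degree[of "insert k F" k "\<lambda>i. [:- complex_of_real (B i k):]" "cm B", OF _ _ _ cm_degree] insert by simp
  have q0: "?q \<noteq> 0" using insert.IH by (metis coeff_0 zero_neq_one)
  have dq: "degree (pCons 0 ?q) = Suc (card F)" using q0 insert.IH by simp
  have "degree (pCons 0 ?q + ?G) = Suc (card F)"
    using degree_add_eq_left[of ?G "pCons 0 ?q"] dq dG by simp
  moreover have "coeff (pCons 0 ?q + ?G) (Suc (card F)) = 1"
    using insert.IH dG coeff_eq_0[of ?G "Suc (card F)"] by simp
  ultimately show ?case using dec insert by simp
qed

lemma charpoly_nonzero: "finite I \<Longrightarrow> charpoly_on I B \<noteq> 0"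
  using charpoly_monic by (metis coeff_0 zero_neq_one)

lemma poly_det: "poly (det_on I M) x = det_on I (\<lambda>i j. poly (M i j) x)"
  unfolding det_on_def by (simp add: poly_sum poly_prod)

lemma of_real_det: "complex_of_real (det_on I M) = det_on I (\<lambda>i j. complex_of_real (M i j))"
  unfolding det_on_def by (simp add: of_real_sum of_real_prod)

lemma det_colscale:
  fixes B :: "'m \<Rightarrow> 'm \<Rightarrow> 'a::comm_ring_1"
  assumes fin: "finite I"
  shows "det_on I (\<lambda>a b. B a b * w b) = prod w I * det_on I B"
  unfolding det_on_def sum_distrib_left
proof (rule sum.cong[OF refl])
  fix p assume "p \<in> {p. p permutes I}"
  then have p: "p permutes I" by simp
  have "(\<Prod>i\<in>I. w (p i)) = prod w I"
    using prod.permute[OF p, of w] by (simp add: o_def)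
  then show "of_int (sign p) * (\<Prod>i\<in>I. B i (p i) * w (p i)) = prod w I * (of_int (sign p) * (\<Prod>i\<in>I. B i (p i)))"
    by (simp add: prod.distrib)
qed

lemma charpoly_at0:
  assumes fin: "finite I"
  shows "poly (charpoly_on I B) 0 = complex_of_real ((-1) ^ card I * det_on I B)"
proof -
  have "poly (charpoly_on I B) 0 = det_on I (\<lambda>i j. complex_of_real (B i j * (-1)))"
    unfolding charpoly_cm poly_det by (rule det_cong) (simp add: cm_def)
  also have "\<dots> = complex_of_real ((-1) ^ card I * det_on I B)"
    unfolding of_real_det[symmetric] det_colscale[OF fin] by simp
  finally show ?thesis .
qed

lemma small_eps:
  fixes q G :: "complex poly"
  assumes qnz: "\<And>z. Re z \<ge> 0 \<Longrightarrow> poly q z \<noteq> 0"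
    and deg: "degree G \<le> degree q"
    and pos: "poly G 0 / poly q 0 = complex_of_real r" and r: "r > 0"
  shows "\<exists>\<epsilon>>0. \<forall>z. Re z \<ge> 0 \<longrightarrow> z * poly q z + complex_of_real \<epsilon> * poly G z \<noteq> 0"
proof -
  define h where "h z = poly G z / poly q z" for z
  have q0: "poly q 0 \<noteq> 0" using qnz by simp
  have "h \<midarrow>0\<rightarrow> h 0"
    unfolding h_def using q0 by (intro tendsto_intros) (auto intro: isCont_tendsto_compose)
  then obtain \<delta> where d: "\<delta> > 0" and dd: "\<And>z. z \<noteq> 0 \<Longrightarrow> norm z < \<delta> \<Longrightarrow> norm (h z - h 0) < r"
    unfolding LIM_eq using r by force
  have h0: "h 0 = complex_of_real r" using pos h_def by simp
  have near: "z * poly q z + complex_of_real e * poly G z \<noteq> 0"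
    if z: "Re z \<ge> 0" "norm z < \<delta>" and e: "e > 0" for z e
  proof
    assume eq: "z * poly q z + complex_of_real e * poly G z = 0"
    have qz: "poly q z \<noteq> 0" using qnz z by simp
    show False
    proof (cases "z = 0")
      case True
      then have "poly G 0 = 0" using eq e by simp
      then show False using pos r by simp
    next
      case False
      have "norm (h z - h 0) < r" using dd[OF False z(2)] .
      then have "Re (h z) > 0" unfolding h0
        using abs_Re_le_cmod[of "h z - complex_of_real r"] by auto
      moreover have "z = - complex_of_real e * h z"
        using eq qz unfolding h_def by (simp add: field_simps add_eq_0_iff)
      then have "Re z = Re (- complex_of_real e * h z)" by (rule arg_cong)
      then have "Re z = - e * Re (h z)" by simp
      ultimately have "Re z < 0" using e by (simp add: mult_pos_pos)
      then show False using z by simp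
    qed
  qed
  have dz: "degree (pCons 0 q) > degree G"
    using deg qnz[of 0] by (cases "q = 0") auto
  have "((\<lambda>z. poly G z / poly (pCons 0 q) z) \<longlongrightarrow> 0) at_infinity"
    by (rule poly_divide_tendsto_0_at_infinity[OF dz])
  then have "eventually (\<lambda>z. norm (poly G z / poly (pCons 0 q) z) < 1) at_infinity"
    by (rule order_tendstoD(2)[OF tendsto_norm_zero]) simp
  then obtain R where R: "\<And>z. R \<le> norm z \<Longrightarrow> norm (poly G z / (z * poly q z)) < 1"
    unfolding eventually_at_infinity by auto
  define R2 where "R2 = max R \<delta>"
  define C where "C = cball 0 R2 \<inter> - ball 0 \<delta> \<inter> {z. 0 \<le> Re z}"
  have Cn: "z \<in> C \<Longrightarrow> z * poly q z \<noteq> 0" for z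
    unfolding C_def using qnz d by auto
  have "compact C" unfolding C_def
    by (intro compact_Int_closed closed_Compl closed_halfspace_Re_ge compact_cball open_ball)
  moreover have "continuous_on C (\<lambda>z. norm (poly G z) / norm (z * poly q z))"
    using Cn by (intro continuous_intros continuous_on_poly) auto
  ultimately have "compact ((\<lambda>z. norm (poly G z) / norm (z * poly q z)) ` C)"
    by (rule compact_continuous_image[rotated])
  then have "bounded ((\<lambda>z. norm (poly G z) / norm (z * poly q z)) ` C)"
    by (rule compact_imp_bounded)
  then obtain b where b: "b > 0" and bb0: "\<And>x. x \<in> (\<lambda>z. norm (poly G z) / norm (z * poly q z)) ` C \<Longrightarrow> norm x \<le> b"
    unfolding bounded_pos by blast
  have bb: "norm (poly G z) / norm (z * poly q z) \<le> b" if "z \<in> C" for z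
  proof -
    have "norm (norm (poly G z) / norm (z * poly q z)) \<le> b" using bb0 that by blast
    then show ?thesis by simp
  qed
  define e where "e = 1 / (b + 1)"
  have e: "e > 0" "e < 1" using b unfolding e_def by auto
  show ?thesis
  proof (intro exI[of _ e] conjI allI impI)
    show "e > 0" using e by simp
    fix z assume z: "Re z \<ge> 0"
    show "z * poly q z + complex_of_real e * poly G z \<noteq> 0"
    proof (cases "norm z < \<delta>")
      case True
      then show ?thesis using near z e by simp
    next
      case False
      have zq: "z * poly q z \<noteq> 0" using False d qnz z by auto
      have lt: "norm (complex_of_real e * poly G z) < norm (z * poly q z)"
      proof (cases "norm z \<le> R2")
        case True
        then have "z \<in> C" using False z unfolding C_def by auto
        then have "norm (poly G z) \<le> b * norm (z * poly q z)"
          using bb[of z] zq by (simp add: divide_le_eq)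
        then have "e * norm (poly G z) \<le> e * b * norm (z * poly q z)"
          using e by (simp add: mult_left_mono)
        also have "\<dots> < norm (z * poly q z)"
          using zq b unfolding e_def by (simp add: field_simps)
        finally show ?thesis using e(1) by (simp add: norm_mult)
      next
        case False
        then have "R \<le> norm z" unfolding R2_def by simp
        then have "norm (poly G z / (z * poly q z)) < 1" by (rule R)
        then have "norm (poly G z) < norm (z * poly q z)"
          using zq by (simp add: norm_divide divide_less_eq)
        moreover have "norm (complex_of_real e * poly G z) = e * norm (poly G z)"
          using e by (simp add: norm_mult)
        moreover have "e * norm (poly G z) \<le> norm (poly G z)"
          by (rule mult_left_le_one_le) (use e in auto)
        ultimately show ?thesis by linarith
      qed
      show ?thesis
      proof
        assume "z * poly q z + complex_of_real e * poly G z = 0"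
        then have "complex_of_real e * poly G z = - (z * poly q z)" by (rule add_eq_0_iff[THEN iffD1])
        then have "norm (complex_of_real e * poly G z) = norm (z * poly q z)" by simp
        then show False using lt by simp
      qed
    qed
  qed
qed

lemma sgn_pos:
  fixes x :: real
  assumes "sgn x = (-1) ^ m"
  shows "(-1) ^ m * x > 0"
proof (cases "even m")
  case True
  then have "sgn x = 1" using assms by simp
  then show ?thesis using True by (simp add: sgn_1_pos)
next
  case False
  then have "sgn x = -1" using assms by simp
  then show ?thesis using False by (simp add: sgn_1_neg)
qed

lemma stabilize:
  fixes A :: "'m \<Rightarrow> 'm \<Rightarrow> real" and f :: "nat \<Rightarrow> 'm set"
  assumes fin: "finite K" and P0: "P0_minus_on K A"
    and ch1: "\<forall>i\<in>{1..card K}. f i \<subseteq> K \<and> card (f i) = i \<and> det_on (f i) A \<noteq> 0"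
    and ch2: "\<forall>i\<in>{1..<card K}. f i \<subset> f (Suc i)"
  shows "\<exists>d. (\<forall>j. d j > 0) \<and> (\<forall>z. poly (charpoly_on K (\<lambda>a b. A a b * d b)) z = 0 \<longrightarrow> Re z < 0)"
proof -
  define F where "F i = (if i = 0 then {} else f i)" for i
  have FK: "F i \<subseteq> K" if "i \<le> card K" for i
    using ch1 that unfolding F_def by auto
  have Ffin: "finite (F i)" if "i \<le> card K" for i
    using FK[OF that] fin finite_subset by blast
  have Fcard: "card (F i) = i" if "i \<le> card K" for i
    using ch1 that unfolding F_def by auto
  have Fsgn: "sgn (det_on (F i) A) = (-1) ^ i" if "i \<le> card K" for i
  proof (cases "i = 0")
    case True
    then show ?thesis unfolding F_def by (simp add: det_empty)
  next
    case False
    then have "det_on (F i) A \<noteq> 0" using ch1 that unfolding F_def by auto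
    then show ?thesis using P0 FK[OF that] Fcard[OF that] unfolding P0_minus_on_def by auto
  qed
  have Fstep: "\<exists>k. k \<notin> F i \<and> F (Suc i) = insert k (F i)" if "i < card K" for i
  proof -
    have sub: "F i \<subseteq> F (Suc i)"
      using ch2 that unfolding F_def by auto
    have "card (F (Suc i) - F i) = 1"
      using card_Diff_subset[OF Ffin sub] Fcard[of i] Fcard[of "Suc i"] that
      by (simp add: Ffin)
    then obtain k where "F (Suc i) - F i = {k}" by (rule card_1_singletonE)
    then show ?thesis using sub by blast
  qed
  have main: "\<exists>d. (\<forall>j. d j > 0) \<and> (\<forall>z. poly (charpoly_on (F i) (\<lambda>a b. A a b * d b)) z = 0 \<longrightarrow> Re z < 0)"
    if "i \<le> card K" for i
    using that
  proof (induction i)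
    case 0
    show ?case by (rule exI[of _ "\<lambda>_. 1"]) (simp add: F_def charpoly_cm det_empty)
  next
    case (Suc i)
    then have il: "i < card K" by simp
    obtain d where dpos: "\<forall>j. d j > 0" and dneg: "\<forall>z. poly (charpoly_on (F i) (\<lambda>a b. A a b * d b)) z = 0 \<longrightarrow> Re z < 0"
      using Suc by auto
    obtain k where kF: "k \<notin> F i" and FS: "F (Suc i) = insert k (F i)" using Fstep[OF il] by blast
    define I where "I = insert k (F i)"
    have finF: "finite (F i)" using Ffin[of i] il by simp
    have finI: "finite I" unfolding I_def using finF by simp
    have kI: "k \<in> I" unfolding I_def by simp
    have IF: "I - {k} = F i" unfolding I_def by (rule Diff_insert_absorb[OF kF])
    define q where "q = charpoly_on (F i) (\<lambda>a b. A a b * d b)"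
    define G where "G = det_on I (\<lambda>a b. if b = k then [:- complex_of_real (A a k):] else cm (\<lambda>a b. A a b * d b) a b)"
    have formula: "poly (charpoly_on I (\<lambda>a b. A a b * (d(k := e)) b)) z = z * poly q z + complex_of_real e * poly G z" for e z
    proof -
      have "charpoly_on I (\<lambda>a b. A a b * (d(k := e)) b) = [:0, 1:] * charpoly_on (F i) (\<lambda>a b. A a b * (d(k := e)) b) +
        det_on I (\<lambda>a b. if b = k then [:- complex_of_real (A a k * (d(k := e)) k):] else cm (\<lambda>a b. A a b * (d(k := e)) b) a b)"
        unfolding IF[symmetric] by (rule charpoly_decomp[OF finI kI])
      also have "charpoly_on (F i) (\<lambda>a b. A a b * (d(k := e)) b) = q"
        unfolding q_def charpoly_cm by (rule det_cong) (use kF in \<open>auto simp: cm_def\<close>)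
      also have "det_on I (\<lambda>a b. if b = k then [:- complex_of_real (A a k * (d(k := e)) k):] else cm (\<lambda>a b. A a b * (d(k := e)) b) a b)
        = det_on I (\<lambda>a b. if b = k then [:complex_of_real e:] * [:- complex_of_real (A a k):] else cm (\<lambda>a b. A a b * d b) a b)"
        by (rule det_cong) (auto simp: cm_def)
      also have "\<dots> = [:complex_of_real e:] * G"
        unfolding G_def by (rule det_scale_col[OF finI kI])
      finally show ?thesis by simp
    qed
    have qnz: "poly q z \<noteq> 0" if "Re z \<ge> 0" for z
      using dneg that unfolding q_def by force
    have degq: "degree q = card (F i)"
      unfolding q_def using charpoly_monic Ffin il by (meson less_imp_le)
    have degG: "degree G \<le> degree q"
    proof -
      have "degree G \<le> card I - 1"
        unfolding G_def by (rule det_degree[OF finI kI _ cm_degree]) simp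
      moreover have "card I = Suc (card (F i))"
        unfolding I_def using kF Ffin[of i] il by simp
      ultimately show ?thesis using degq by simp
    qed
    define d1 where "d1 = d(k := 1)"
    have G0: "poly G 0 = complex_of_real ((-1) ^ card I * (prod d1 I * det_on I A))"
    proof -
      have "poly G 0 = poly (charpoly_on I (\<lambda>a b. A a b * d1 b)) 0"
        using formula[of 1 0] unfolding d1_def by simp
      also have "\<dots> = complex_of_real ((-1) ^ card I * det_on I (\<lambda>a b. A a b * d1 b))"
        by (rule charpoly_at0[OF finI])
      also have "det_on I (\<lambda>a b. A a b * d1 b) = prod d1 I * det_on I A"
        by (rule det_colscale[OF finI])
      finally show ?thesis .
    qed
    have q0: "poly q 0 = complex_of_real ((-1) ^ card (F i) * (prod d (F i) * det_on (F i) A))"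
    proof -
      have "poly q 0 = complex_of_real ((-1) ^ card (F i) * det_on (F i) (\<lambda>a b. A a b * d b))"
        unfolding q_def by (rule charpoly_at0[OF finF])
      also have "det_on (F i) (\<lambda>a b. A a b * d b) = prod d (F i) * det_on (F i) A"
        by (rule det_colscale[OF finF])
      finally show ?thesis .
    qed
    have cI: "card I = Suc i" unfolding I_def using kF finF Fcard il by (simp add: less_imp_le)
    have "sgn (det_on I A) = (-1) ^ card I"
      using Fsgn[OF Suc.prems] FS cI unfolding I_def by simp
    then have sI: "(-1) ^ card I * det_on I A > 0" by (rule sgn_pos)
    have "sgn (det_on (F i) A) = (-1) ^ card (F i)"
      using Fsgn[of i] Fcard[of i] il by simp
    then have sF: "(-1) ^ card (F i) * det_on (F i) A > 0" by (rule sgn_pos)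
    have p1: "prod d1 I > 0" unfolding d1_def using dpos by (intro prod_pos) auto
    have p2: "prod d (F i) > 0" using dpos by (intro prod_pos) auto
    define r where "r = ((-1) ^ card I * (prod d1 I * det_on I A)) / ((-1) ^ card (F i) * (prod d (F i) * det_on (F i) A))"
    have e1: "(-1) ^ card I * (prod d1 I * det_on I A) = prod d1 I * ((-1) ^ card I * det_on I A)"
      by (simp add: algebra_simps)
    have e2: "(-1) ^ card (F i) * (prod d (F i) * det_on (F i) A) = prod d (F i) * ((-1) ^ card (F i) * det_on (F i) A)"
      by (simp add: algebra_simps)
    have num: "(-1) ^ card I * (prod d1 I * det_on I A) > 0"
      unfolding e1 using sI p1 by (rule mult_pos_pos[rotated])
    have den: "(-1) ^ card (F i) * (prod d (F i) * det_on (F i) A) > 0"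
      unfolding e2 using sF p2 by (rule mult_pos_pos[rotated])
    have rpos: "r > 0" unfolding r_def using num den by simp
    have ratio: "poly G 0 / poly q 0 = complex_of_real r"
      unfolding G0 q0 r_def by (simp add: of_real_divide)
    obtain e where e: "e > 0" and enz: "\<forall>z. Re z \<ge> 0 \<longrightarrow> z * poly q z + complex_of_real e * poly G z \<noteq> 0"
      using small_eps[OF qnz degG ratio rpos] by blast
    show ?case
    proof (intro exI[of _ "d(k := e)"] conjI allI impI)
      show "\<And>j. (d(k := e)) j > 0" using dpos e by simp
      fix z assume "poly (charpoly_on (F (Suc i)) (\<lambda>a b. A a b * (d(k := e)) b)) z = 0"
      then have "z * poly q z + complex_of_real e * poly G z = 0"
        using formula FS unfolding I_def by simp
      then show "Re z < 0" using enz not_less by blast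
    qed
  qed
  have FKeq: "F (card K) = K"
  proof (cases "card K = 0")
    case True
    then have "K = {}" using fin by simp
    then show ?thesis unfolding F_def by simp
  next
    case False
    have s1: "F (card K) \<subseteq> K" by (rule FK) simp
    have s2: "card (F (card K)) = card K" by (rule Fcard) simp
    show ?thesis by (rule card_subset_eq[OF fin s1 s2])
  qed
  have "\<exists>d. (\<forall>j. d j > 0) \<and> (\<forall>z. poly (charpoly_on (F (card K)) (\<lambda>a b. A a b * d b)) z = 0 \<longrightarrow> Re z < 0)"
    by (rule main) simp
  then show ?thesis unfolding FKeq .
qed

theorem mainTheorem14:
  fixes s p :: "'j::finite \<Rightarrow> 'm::finite \<Rightarrow> real"
    and S :: "'m \<Rightarrow> 'j \<Rightarrow> real"
    and K :: "'m set" and E :: "'j set" and J :: "'m \<Rightarrow> 'j"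
  assumes "reaction_network s p S"
    and "child_selection s K E J"
    and "unstable_negative_feedback_on K (cs_matrix S J)"
    and "PFF_minus_on K (cs_matrix S J)"
  shows "D_Hopf_on K (cs_matrix S J)"
proof -
  define A where "A = cs_matrix S J"
  have fin: "finite K" by simp
  have hu: "hurwitz_unstable_on K A" and sg: "sgn (det_on K A) = (-1) ^ card K"
    using assms(3) unfolding A_def unstable_negative_feedback_on_def unstable_core_on_def by auto
  have P0: "P0_minus_on K A" using assms(4) unfolding A_def PFF_minus_on_def by auto
  obtain f :: "nat \<Rightarrow> 'm set" where
    ch1: "\<forall>i\<in>{1..card K}. f i \<subseteq> K \<and> card (f i) = i \<and> det_on (f i) A \<noteq> 0"
    and ch2: "\<forall>i\<in>{1..<card K}. f i \<subset> f (Suc i)"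
    using assms(4) unfolding A_def PFF_minus_on_def by blast
  obtain d2 where d2pos: "\<forall>j. d2 j > 0"
    and d2neg: "\<forall>z. poly (charpoly_on K (\<lambda>a b. A a b * d2 b)) z = 0 \<longrightarrow> Re z < 0"
    using stabilize[OF fin P0 ch1 ch2] by blast
  have det0: "det_on K A \<noteq> 0"
  proof
    assume "det_on K A = 0"
    then have "(0::real) = (-1) ^ card K" using sg by simp
    then show False by simp
  qed
  define P where "P = charpoly_on K A"
  have Pnz: "P \<noteq> 0" unfolding P_def by (rule charpoly_nonzero[OF fin])
  obtain z0 where z0: "z0 \<in> eigenvalues_on K A" "Re z0 > 0"
    using hu unfolding hurwitz_unstable_on_def by blast
  have finE: "finite {z \<in> eigenvalues_on K A. Re z > 0}"
    using poly_roots_finite[OF Pnz] unfolding eigenvalues_on_def P_def by simp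
  have "poly P z0 = 0" using z0 unfolding eigenvalues_on_def P_def by simp
  then have "order z0 P \<noteq> 0" using Pnz order_root by blast
  moreover have "order z0 P \<le> (\<Sum>z\<in>{z \<in> eigenvalues_on K A. Re z > 0}. order z P)"
    by (rule member_le_sum) (use z0 finE in auto)
  ultimately have pos1: "(\<Sum>z\<in>{z \<in> eigenvalues_on K A. Re z > 0}. order z (charpoly_on K A)) \<noteq> 0"
    unfolding P_def by linarith
  have e2: "{z \<in> eigenvalues_on K (\<lambda>a b. A a b * d2 b). Re z > 0} = {}"
    using d2neg unfolding eigenvalues_on_def by force
  have A1: "(\<lambda>i j. A i j * 1) = A" by simp
  have ineq: "inertia_on K (\<lambda>i j. A i j * 1) \<noteq> inertia_on K (\<lambda>i j. A i j * d2 j)"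
    unfolding inertia_on_def A1 e2 using pos1 by simp
  have pos: "\<forall>i\<in>K. (\<lambda>_. 1::real) i > 0 \<and> d2 i > 0" using d2pos by simp
  have "D_Hopf_on K A"
    unfolding D_Hopf_on_def
  proof (intro exI[of _ K] conjI)
    show "K \<subseteq> K" by simp
    show "det_on K A \<noteq> 0" by (rule det0)
    show "\<exists>d1 d2. (\<forall>i\<in>K. 0 < d1 i \<and> 0 < d2 i) \<and>
        inertia_on K (\<lambda>i j. A i j * d1 j) \<noteq> inertia_on K (\<lambda>i j. A i j * d2 j)"
    proof (rule exI[of _ "\<lambda>_. 1::real"], rule exI[of _ d2], rule conjI)
      show "\<forall>i\<in>K. 0 < (1::real) \<and> 0 < d2 i" using d2pos by simp
      show "inertia_on K (\<lambda>i j. A i j * 1) \<noteq> inertia_on K (\<lambda>i j. A i j * d2 j)"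
        by (rule ineq)
    qed
  qed
  then show ?thesis unfolding A_def .
qed

end
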